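(* In the setting described in the context (with any one of the three learning-rate setups (a), (b), (c)), there exist a deterministic constant $C$ and an integer $m_0$ such that for all $m\ge m_0$, $$\|z_{2,m}\|_m\le T_m\,C\,\big(\|w_{t_m}-w_*\|_m+1\big).$$
   Context: Setting. $\{Y_t\}_{t\ge0}$ is a Markov chain on a measurable space $\mathcal{Y}$ with transition kernel $P$ and unique stationary distribution $d_{\mathcal{Y}}$, with $\int|P^n(y,y')-d_{\mathcal{Y}}(y')|\,\mathrm{d}y'\le C_A\varrho^n$ for all $y,n$, some $\varrho\in[0,1)$. $H:\mathbb{R}^d\times\mathcal{Y}\to\mathbb{R}^d$, $h(w)=\mathbb{E}_{y\sim d_{\mathcal{Y}}}[H(w,y)]$; for some norm $\|\cdot\|$ and $\kappa\in[0,1)$, $\|h(w)-h(w')\|\le\kappa\|w-w'\|$, with fixed point $w_*$; $\|H(w,y)-H(w',y)\|\le L_h\|w-w'\|$ for all $w,w',y$ and $\sup_y\|H(0,y)\|<\infty$. Iterates: $w_0\in\mathbb{R}^d$, $w_{t+1}=w_t+\alpha_t(H(w_t,Y_{t+1})-w_t)$. Put $G(w,y)=H(w,y)-w$. Learning-rate setups with $C_\alpha>0$: (a) $\alpha_t=\frac{C_\alpha}{t+3}$, $T_m=\frac{C_\alpha\ln^{\nu_1}(m+3)}{m+3}$, $\nu_1\in(0,1)$; (b) $\alpha_t=\frac{C_\alpha}{(t+3)^\nu}$, $\nu\in(\frac23,1)$, $T_m=\frac{C_\alpha}{(m+3)^{\nu_2}}$, $\frac12<\nu_2<\frac\nu{2-\nu}$;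 (c) $\alpha_t=\frac{C_\alpha}{(t+3)\ln^\nu(t+3)}$, $\nu\in(0,1)$, $T_m=\frac{C_\alpha}{m+3}$. Anchors: $t_0=0$, $t_{m+1}=\min\{k:\sum_{t=t_m}^{k-1}\alpha_t\ge T_m\}$. Filtration $\mathcal{F}_t=\sigma(w_0,Y_1,\dots,Y_t)$, $\mathbb{E}_m[\cdot]=\mathbb{E}[\cdot\mid\mathcal{F}_{t_m}]$. Define $z_{2,m}=\sum_{t=t_m}^{t_{m+1}-1}\alpha_t\big(G(w_{t_m},Y_{t+1})-\mathbb{E}_m[G(w_{t_m},Y_{t+1})]\big)$. The norm $\|\cdot\|_m$: fix a norm $\|\cdot\|_s$ such that $\frac12\|\cdot\|_s^2$ is smooth w.r.t. $\|\cdot\|_s$ and $\xi>0$; $\|\cdot\|_m$ is the norm with $\frac12\|w\|_m^2=\inf_u\{\frac12\|u\|^2+\frac1{2\xi}\|w-u\|_s^2\}$. *)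

theory Defs
  imports "HOL-Probability.Probability"
begin

definition is_norm :: "(real^'d \<Rightarrow> real) \<Rightarrow> bool" where
  "is_norm N \<longleftrightarrow> (\<forall>x. N x \<ge> 0) \<and> (\<forall>x. N x = 0 \<longleftrightarrow> x = 0)
     \<and> (\<forall>c x. N (c *\<^sub>R x) = \<bar>c\<bar> * N x) \<and> (\<forall>x y. N (x + y) \<le> N x + N y)"

text \<open>f is L-smooth w.r.t. the norm N: f is differentiable and its gradient is
  L-Lipschitz from (R^d, N) to the dual space (dual norm written out pointwise).\<close>
definition smooth_wrt :: "(real^'d \<Rightarrow> real) \<Rightarrow> (real^'d \<Rightarrow> real) \<Rightarrow> bool" where
  "smooth_wrt f N \<longleftrightarrow> (\<exists>L f'. (\<forall>x. (f has_derivative f' x) (at x)) \<and>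
     (\<forall>x y u. \<bar>f' x u - f' y u\<bar> \<le> L * N (x - y) * N u))"

definition moreau_norm :: "(real^'d \<Rightarrow> real) \<Rightarrow> (real^'d \<Rightarrow> real) \<Rightarrow> real \<Rightarrow> real^'d \<Rightarrow> real" where
  "moreau_norm N Ns \<xi> w =
     sqrt (2 * (INF u. (1/2) * (N u)\<^sup>2 + (1 / (2 * \<xi>)) * (Ns (w - u))\<^sup>2))"

primrec kernel_pow :: "'y measure \<Rightarrow> ('y \<Rightarrow> 'y measure) \<Rightarrow> nat \<Rightarrow> 'y \<Rightarrow> 'y measure" where
  "kernel_pow S P 0 y = return S y"
| "kernel_pow S P (Suc n) y = bind (kernel_pow S P n y) P"

definition gen_sigma :: "'a measure \<Rightarrow> 'y measure \<Rightarrow> (nat \<Rightarrow> 'a \<Rightarrow> 'y) \<Rightarrow> nat set \<Rightarrow> 'a measure" where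
  "gen_sigma M S Y I = sigma (space M) {Y s -` A \<inter> space M | s A. s \<in> I \<and> A \<in> sets S}"

definition markov_chain :: "'a measure \<Rightarrow> 'y measure \<Rightarrow> (nat \<Rightarrow> 'a \<Rightarrow> 'y) \<Rightarrow> ('y \<Rightarrow> 'y measure) \<Rightarrow> bool" where
  "markov_chain M S Y P \<longleftrightarrow> prob_space M \<and> P \<in> S \<rightarrow>\<^sub>M prob_algebra S \<and>
     (\<forall>t. Y t \<in> M \<rightarrow>\<^sub>M S) \<and>
     (\<forall>t. \<forall>A \<in> sets S. AE \<omega> in M.
        real_cond_exp M (gen_sigma M S Y {..t}) (indicator (Y (Suc t) -` A \<inter> space M)) \<omega>
          = measure (P (Y t \<omega>)) A)"

definition stationary :: "'y measure \<Rightarrow> ('y \<Rightarrow> 'y measure) \<Rightarrow> 'y measure \<Rightarrow> bool" where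
  "stationary S P \<mu> \<longleftrightarrow> prob_space \<mu> \<and> sets \<mu> = sets S \<and> bind \<mu> P = \<mu>"

definition cond_exp_vec :: "'a measure \<Rightarrow> 'a measure \<Rightarrow> ('a \<Rightarrow> real^'d) \<Rightarrow> 'a \<Rightarrow> real^'d" where
  "cond_exp_vec M F X \<omega> = (\<chi> i. real_cond_exp M F (\<lambda>\<omega>'. X \<omega>' $ i) \<omega>)"

primrec iterate :: "(real^'d \<Rightarrow> 'y \<Rightarrow> real^'d) \<Rightarrow> (nat \<Rightarrow> real) \<Rightarrow> (nat \<Rightarrow> 'a \<Rightarrow> 'y) \<Rightarrow> real^'d
                    \<Rightarrow> nat \<Rightarrow> 'a \<Rightarrow> real^'d" where
  "iterate H \<alpha> Y w0 0 \<omega> = w0"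
| "iterate H \<alpha> Y w0 (Suc t) \<omega> =
     iterate H \<alpha> Y w0 t \<omega> + \<alpha> t *\<^sub>R (H (iterate H \<alpha> Y w0 t \<omega>) (Y (Suc t) \<omega>) - iterate H \<alpha> Y w0 t \<omega>)"

primrec anchor :: "(nat \<Rightarrow> real) \<Rightarrow> (nat \<Rightarrow> real) \<Rightarrow> nat \<Rightarrow> nat" where
  "anchor \<alpha> T 0 = 0"
| "anchor \<alpha> T (Suc m) = (LEAST k. (\<Sum>t\<in>{anchor \<alpha> T m..<k}. \<alpha> t) \<ge> T m)"

text \<open>Filtration F_t = sigma(w_0, Y_1, ..., Y_t); w_0 is deterministic.\<close>
definition filt :: "'a measure \<Rightarrow> 'y measure \<Rightarrow> (nat \<Rightarrow> 'a \<Rightarrow> 'y) \<Rightarrow> nat \<Rightarrow> 'a measure" where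
  "filt M S Y t = gen_sigma M S Y {1..t}"

definition z2 :: "'a measure \<Rightarrow> 'y measure \<Rightarrow> (real^'d \<Rightarrow> 'y \<Rightarrow> real^'d) \<Rightarrow> (nat \<Rightarrow> real) \<Rightarrow> (nat \<Rightarrow> real)
                  \<Rightarrow> (nat \<Rightarrow> 'a \<Rightarrow> 'y) \<Rightarrow> real^'d \<Rightarrow> nat \<Rightarrow> 'a \<Rightarrow> real^'d" where
  "z2 M S H \<alpha> T Y w0 m \<omega> =
     (let G = (\<lambda>w y. H w y - w);
          tm = anchor \<alpha> T m;
          wm = iterate H \<alpha> Y w0 tm
      in (\<Sum>t\<in>{tm..<anchor \<alpha> T (Suc m)}.
            \<alpha> t *\<^sub>R (G (wm \<omega>) (Y (Suc t) \<omega>)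
                     - cond_exp_vec M (filt M S Y tm) (\<lambda>\<omega>'. G (wm \<omega>') (Y (Suc t) \<omega>')) \<omega>)))"

definition lr_setup :: "real \<Rightarrow> (nat \<Rightarrow> real) \<Rightarrow> (nat \<Rightarrow> real) \<Rightarrow> bool" where
  "lr_setup C\<alpha> \<alpha> T \<longleftrightarrow>
     (\<exists>\<nu>1. 0 < \<nu>1 \<and> \<nu>1 < 1 \<and>
        \<alpha> = (\<lambda>t. C\<alpha> / (real t + 3)) \<and>
        T = (\<lambda>m. C\<alpha> * (ln (real m + 3)) powr \<nu>1 / (real m + 3)))
   \<or> (\<exists>\<nu> \<nu>2. 2/3 < \<nu> \<and> \<nu> < 1 \<and> 1/2 < \<nu>2 \<and> \<nu>2 < \<nu> / (2 - \<nu>) \<and>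
        \<alpha> = (\<lambda>t. C\<alpha> / (real t + 3) powr \<nu>) \<and>
        T = (\<lambda>m. C\<alpha> / (real m + 3) powr \<nu>2))
   \<or> (\<exists>\<nu>. 0 < \<nu> \<and> \<nu> < 1 \<and>
        \<alpha> = (\<lambda>t. C\<alpha> / ((real t + 3) * (ln (real t + 3)) powr \<nu>)) \<and>
        T = (\<lambda>m. C\<alpha> / (real m + 3)))"

end

theory Submission
  imports Defs
begin


lemma isnorm_0: "is_norm N \<Longrightarrow> N 0 = 0"
  unfolding is_norm_def by blast

lemma isnorm_sum: assumes "is_norm N" "finite A" shows "N (sum f A) \<le> (\<Sum>a\<in>A. N (f a))"
  using assms(2)
proof (induction A rule: finite_induct)
  case empty then show ?case using isnorm_0[OF assms(1)] by simp
next
  case (insert x F)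
  have "N (sum f (insert x F)) = N (f x + sum f F)" using insert by simp
  also have "\<dots> \<le> N (f x) + N (sum f F)" using assms(1) unfolding is_norm_def by blast
  finally show ?case using insert by simp
qed

lemma isnorm_scale: "is_norm N \<Longrightarrow> N (c *\<^sub>R x) = \<bar>c\<bar> * N x"
  unfolding is_norm_def by blast
lemma isnorm_tri: "is_norm N \<Longrightarrow> N (x + y) \<le> N x + N y"
  unfolding is_norm_def by blast
lemma isnorm_nonneg: "is_norm N \<Longrightarrow> N x \<ge> 0"
  unfolding is_norm_def by blast
lemma isnorm_eq0: "is_norm N \<Longrightarrow> N x = 0 \<longleftrightarrow> x = 0"
  unfolding is_norm_def by blast
lemma isnorm_minus: assumes "is_norm N" shows "N (- x) = N x"
  using isnorm_scale[OF assms, of "-1" x] by simp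
lemma isnorm_diff_tri: assumes "is_norm N" shows "N (x - y) \<le> N x + N y"
  using isnorm_tri[OF assms, of x "-y"] isnorm_minus[OF assms, of y] by simp
lemma isnorm_rev_tri: assumes "is_norm N" shows "N x - N y \<le> N (x - y)"
  using isnorm_tri[OF assms, of "x - y" y] by simp
lemma isnorm_commute: assumes "is_norm N" shows "N (x - y) = N (y - x)"
  using isnorm_minus[OF assms, of "x - y"] by simp

lemma isnorm_upper:
  fixes N :: "real^'d \<Rightarrow> real"
  assumes "is_norm N" shows "\<exists>K\<ge>0. \<forall>x. N x \<le> K * norm x"
proof (intro exI[of _ "\<Sum>b\<in>Basis. N b"] conjI allI)
  show "0 \<le> (\<Sum>b\<in>(Basis::(real^'d) set). N b)" using isnorm_nonneg[OF assms] by (simp add: sum_nonneg)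
  fix x :: "real^'d"
  have "N x = N (\<Sum>b\<in>Basis. (x \<bullet> b) *\<^sub>R b)" by (simp add: euclidean_representation)
  also have "\<dots> \<le> (\<Sum>b\<in>Basis. N ((x \<bullet> b) *\<^sub>R b))" by (rule isnorm_sum[OF assms]) simp
  also have "\<dots> = (\<Sum>b\<in>Basis. \<bar>x \<bullet> b\<bar> * N b)" using isnorm_scale[OF assms] by simp
  also have "\<dots> \<le> (\<Sum>b\<in>Basis. norm x * N b)"
    by (rule sum_mono, rule mult_right_mono) (auto simp: Basis_le_norm isnorm_nonneg[OF assms])
  also have "\<dots> = (\<Sum>b\<in>Basis. N b) * norm x" by (simp add: sum_distrib_left mult.commute)
  finally show "N x \<le> (\<Sum>b\<in>Basis. N b) * norm x" .
qed

lemma isnorm_lower: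
  fixes N :: "real^'d \<Rightarrow> real"
  assumes "is_norm N" shows "\<exists>c>0. \<forall>x. c * norm x \<le> N x"
proof -
  obtain K where K: "K \<ge> 0" "\<And>x. N x \<le> K * norm x" using isnorm_upper[OF assms] by blast
  have "lipschitz_on K UNIV N"
  proof (rule lipschitz_onI)
    fix x y :: "real^'d"
    have "N x - N y \<le> N (x - y)" "N y - N x \<le> N (y - x)" using isnorm_rev_tri[OF assms] by auto
    moreover have "N (x - y) \<le> K * dist x y" "N (y - x) \<le> K * dist x y"
      using K(2)[of "x - y"] K(2)[of "y - x"] by (auto simp: dist_norm norm_minus_commute)
    ultimately show "dist (N x) (N y) \<le> K * dist x y" by (auto simp: dist_real_def abs_if)
  qed (use K in auto)
  then have cont: "continuous_on (sphere 0 1) N"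
    using lipschitz_on_continuous_on continuous_on_subset by blast
  obtain b :: "real^'d" where b: "b \<in> Basis" using nonempty_Basis by blast
  then have "b \<in> sphere 0 1" by simp
  then obtain x0 where x0: "x0 \<in> sphere 0 1" "\<And>y. y \<in> sphere 0 1 \<Longrightarrow> N x0 \<le> N y"
    using continuous_attains_inf[OF compact_sphere _ cont] by blast
  have "x0 \<noteq> 0" using x0(1) by auto
  then have pos: "N x0 > 0" using isnorm_eq0[OF assms, of x0] isnorm_nonneg[OF assms, of x0] by linarith
  show ?thesis
  proof (intro exI[of _ "N x0"] conjI allI pos)
    fix x :: "real^'d"
    show "N x0 * norm x \<le> N x"
    proof (cases "x = 0")
      case True then show ?thesis using isnorm_0[OF assms] by simp
    next
      case False
      then have "(1 / norm x) *\<^sub>R x \<in> sphere 0 1" by simp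
      then have "N x0 \<le> N ((1 / norm x) *\<^sub>R x)" by (rule x0(2))
      also have "\<dots> = N x / norm x" using isnorm_scale[OF assms] by simp
      finally show ?thesis using False by (simp add: field_simps)
    qed
  qed
qed




lemma moreau_le:
  fixes N Ns :: "real^'d \<Rightarrow> real"
  assumes "is_norm N" "is_norm Ns" "\<xi> > 0"
  shows "moreau_norm N Ns \<xi> w \<le> N w"
proof -
  let ?f = "\<lambda>u. (1/2) * (N u)\<^sup>2 + (1 / (2 * \<xi>)) * (Ns (w - u))\<^sup>2"
  have bdd: "bdd_below (range ?f)" by (rule bdd_belowI[of _ 0]) (use assms in auto)
  have "(INF u. ?f u) \<le> ?f w" by (rule cINF_lower[OF bdd]) simp
  also have "\<dots> = (1/2) * (N w)\<^sup>2" using isnorm_0[OF assms(2)] by simp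
  finally have "2 * (INF u. ?f u) \<le> (N w)\<^sup>2" by simp
  then have "sqrt (2 * (INF u. ?f u)) \<le> sqrt ((N w)\<^sup>2)" by (rule real_sqrt_le_mono)
  also have "\<dots> = N w" using isnorm_nonneg[OF assms(1)] by simp
  finally show ?thesis unfolding moreau_norm_def .
qed

lemma moreau_ge:
  fixes N Ns :: "real^'d \<Rightarrow> real"
  assumes "is_norm N" "is_norm Ns" "\<xi> > 0"
  shows "\<exists>c>0. \<forall>w. c * norm w \<le> moreau_norm N Ns \<xi> w"
proof -
  obtain a where a: "a > 0" "\<And>x. a * norm x \<le> N x" using isnorm_lower[OF assms(1)] by blast
  obtain b where b: "b > 0" "\<And>x. b * norm x \<le> Ns x" using isnorm_lower[OF assms(2)] by blast
  define m0 where "m0 = min (a\<^sup>2) (b\<^sup>2 / \<xi>)"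
  have m0: "m0 > 0" using a b assms(3) by (simp add: m0_def)
  show ?thesis
  proof (intro exI[of _ "sqrt (m0 / 2)"] conjI allI)
    show "sqrt (m0/2) > 0" using m0 by simp
    fix w :: "real^'d"
    let ?f = "\<lambda>u. (1/2) * (N u)\<^sup>2 + (1 / (2 * \<xi>)) * (Ns (w - u))\<^sup>2"
    have lb: "m0 / 4 * (norm w)\<^sup>2 \<le> ?f u" for u
    proof -
      have h1: "(a * norm u)\<^sup>2 \<le> (N u)\<^sup>2" using a(2)[of u] a(1) by (intro power_mono) auto
      have h2: "(b * norm (w - u))\<^sup>2 \<le> (Ns (w - u))\<^sup>2" using b(2)[of "w - u"] b(1) by (intro power_mono) auto
      have h3: "m0 * (norm u)\<^sup>2 \<le> (a * norm u)\<^sup>2" unfolding m0_def power_mult_distrib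
        by (rule mult_right_mono) auto
      have h4: "m0 * (norm (w - u))\<^sup>2 \<le> (b * norm (w - u))\<^sup>2 / \<xi>"
      proof -
        have "m0 * (norm (w - u))\<^sup>2 \<le> (b\<^sup>2 / \<xi>) * (norm (w - u))\<^sup>2"
          unfolding m0_def by (rule mult_right_mono) auto
        then show ?thesis by (simp add: power_mult_distrib)
      qed
      have h5: "norm w \<le> norm u + norm (w - u)" using norm_triangle_ineq[of u "w - u"] by simp
      have h6: "(norm w)\<^sup>2 \<le> 2 * ((norm u)\<^sup>2 + (norm (w - u))\<^sup>2)"
      proof -
        have "(norm w)\<^sup>2 \<le> (norm u + norm (w - u))\<^sup>2" using h5 by (intro power_mono) auto
        also have "\<dots> \<le> 2 * ((norm u)\<^sup>2 + (norm (w - u))\<^sup>2)"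
        proof -
          have "(norm u + norm (w - u))\<^sup>2 + (norm u - norm (w - u))\<^sup>2 = 2 * ((norm u)\<^sup>2 + (norm (w - u))\<^sup>2)"
            by (simp add: power2_eq_square algebra_simps)
          moreover have "(norm u - norm (w - u))\<^sup>2 \<ge> 0" by simp
          ultimately show ?thesis by linarith
        qed
        finally show ?thesis .
      qed
      have "m0 / 4 * (norm w)\<^sup>2 \<le> m0 / 2 * ((norm u)\<^sup>2 + (norm (w - u))\<^sup>2)"
        using mult_left_mono[OF h6, of "m0/4"] m0 by (simp add: algebra_simps)
      also have "\<dots> \<le> (1/2) * (a * norm u)\<^sup>2 + (1/2) * ((b * norm (w - u))\<^sup>2 / \<xi>)"
        using h3 h4 by (simp add: field_simps)
      also have "\<dots> \<le> ?f u"
      proof -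
        have "(b * norm (w - u))\<^sup>2 / \<xi> \<le> (Ns (w - u))\<^sup>2 / \<xi>"
          using divide_right_mono[OF h2, of \<xi>] assms(3) by simp
        then show ?thesis using h1 by simp
      qed
      finally show ?thesis .
    qed
    have "m0 / 4 * (norm w)\<^sup>2 \<le> (INF u. ?f u)" by (rule cINF_greatest) (use lb in auto)
    then have "m0 / 2 * (norm w)\<^sup>2 \<le> 2 * (INF u. ?f u)" by simp
    then have "sqrt (m0 / 2 * (norm w)\<^sup>2) \<le> sqrt (2 * (INF u. ?f u))" by (rule real_sqrt_le_mono)
    moreover have "sqrt (m0 / 2 * (norm w)\<^sup>2) = sqrt (m0/2) * norm w"
      by (simp only: real_sqrt_mult real_sqrt_abs) simp
    ultimately show "sqrt (m0/2) * norm w \<le> moreau_norm N Ns \<xi> w" unfolding moreau_norm_def by linarith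
  qed
qed




lemma ln_ge1: "(x::real) \<ge> 3 \<Longrightarrow> ln x \<ge> 1"
proof -
  assume "x \<ge> 3"
  then have "exp 1 \<le> x" using exp_le by linarith
  then show "ln x \<ge> 1" using ln_ge_iff[of x 1] \<open>x \<ge> 3\<close> by simp
qed

lemma lr_facts:
  assumes lr: "lr_setup C\<alpha> \<alpha> T" and Ca: "C\<alpha> > 0"
  shows "(\<forall>t. 0 < \<alpha> t) \<and> (\<forall>m. 0 < T m) \<and> (\<forall>m t. m \<le> t \<longrightarrow> \<alpha> t \<le> T m)
     \<and> (\<forall>t. C\<alpha> / ((real t + 3) * ln (real t + 3)) \<le> \<alpha> t)"
  using lr unfolding lr_setup_def
proof (elim disjE exE conjE)
  fix \<nu>1 assume nu: "0 < \<nu>1" "\<nu>1 < 1" and a: "\<alpha> = (\<lambda>t. C\<alpha> / (real t + 3))"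
    and T: "T = (\<lambda>m. C\<alpha> * ln (real m + 3) powr \<nu>1 / (real m + 3))"
  have l1: "ln (real m + 3) powr \<nu>1 \<ge> 1" for m
    using ln_ge1[of "real m + 3"] nu by (intro ge_one_powr_ge_zero) auto
  have "\<alpha> t \<le> T m" if "m \<le> t" for m t
  proof -
    have "C\<alpha> / (real t + 3) \<le> C\<alpha> / (real m + 3)" using that Ca by (intro divide_left_mono) auto
    also have "\<dots> \<le> C\<alpha> * ln (real m + 3) powr \<nu>1 / (real m + 3)"
      using l1[of m] Ca by (intro divide_right_mono) auto
    finally show ?thesis using a T by simp
  qed
  moreover have "C\<alpha> / ((real t + 3) * ln (real t + 3)) \<le> \<alpha> t" for t
  proof -
    have "C\<alpha> / ((real t + 3) * ln (real t + 3)) \<le> C\<alpha> / ((real t + 3) * 1)"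
      using ln_ge1[of "real t + 3"] Ca by (intro divide_left_mono mult_left_mono) auto
    then show ?thesis using a by simp
  qed
  moreover have "0 < T m" for m using T Ca l1[of m] by (simp add: order_less_le_trans[OF zero_less_one])
  ultimately show ?thesis using a Ca by auto
next
  fix \<nu> \<nu>2 assume nu: "2/3 < \<nu>" "\<nu> < 1" "1/2 < \<nu>2" "\<nu>2 < \<nu> / (2 - \<nu>)"
    and a: "\<alpha> = (\<lambda>t. C\<alpha> / (real t + 3) powr \<nu>)" and T: "T = (\<lambda>m. C\<alpha> / (real m + 3) powr \<nu>2)"
  have "\<nu> / (2 - \<nu>) \<le> \<nu>" using nu by (simp add: field_simps)
  then have n2: "\<nu>2 \<le> \<nu>" using nu by linarith
  have "\<alpha> t \<le> T m" if "m \<le> t" for m t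
  proof -
    have "(real m + 3) powr \<nu>2 \<le> (real m + 3) powr \<nu>" using n2 by (intro powr_mono) auto
    also have "\<dots> \<le> (real t + 3) powr \<nu>" using that nu by (intro powr_mono2) auto
    finally have "(real m + 3) powr \<nu>2 \<le> (real t + 3) powr \<nu>" .
    then have "C\<alpha> / (real t + 3) powr \<nu> \<le> C\<alpha> / (real m + 3) powr \<nu>2"
      using Ca by (intro divide_left_mono) auto
    then show ?thesis using a T by simp
  qed
  moreover have "C\<alpha> / ((real t + 3) * ln (real t + 3)) \<le> \<alpha> t" for t
  proof -
    have "(real t + 3) powr \<nu> \<le> (real t + 3) powr 1" using nu by (intro powr_mono) auto
    also have "\<dots> \<le> (real t + 3) * ln (real t + 3)" using ln_ge1[of "real t + 3"] by simp
    finally have "C\<alpha> / ((real t + 3) * ln (real t + 3)) \<le> C\<alpha> / (real t + 3) powr \<nu>"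
      using Ca by (intro divide_left_mono) auto
    then show ?thesis using a by simp
  qed
  ultimately show ?thesis using a T Ca by auto
next
  fix \<nu> assume nu: "0 < \<nu>" "\<nu> < 1" and a: "\<alpha> = (\<lambda>t. C\<alpha> / ((real t + 3) * ln (real t + 3) powr \<nu>))"
    and T: "T = (\<lambda>m. C\<alpha> / (real m + 3))"
  have l1: "ln (real t + 3) powr \<nu> \<ge> 1" for t
    using ln_ge1[of "real t + 3"] nu by (intro ge_one_powr_ge_zero) auto
  have l2: "ln (real t + 3) powr \<nu> \<le> ln (real t + 3)" for t
  proof -
    have "ln (real t + 3) powr \<nu> \<le> ln (real t + 3) powr 1"
      using ln_ge1[of "real t + 3"] nu by (intro powr_mono) auto
    then show ?thesis using ln_ge1[of "real t + 3"] by simp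
  qed
  have "\<alpha> t \<le> T m" if "m \<le> t" for m t
  proof -
    have "(real m + 3) * 1 \<le> (real t + 3) * ln (real t + 3) powr \<nu>"
      using that l1[of t] by (intro mult_mono) auto
    then have "C\<alpha> / ((real t + 3) * ln (real t + 3) powr \<nu>) \<le> C\<alpha> / (real m + 3)"
      using Ca by (intro divide_left_mono) auto
    then show ?thesis using a T by simp
  qed
  moreover have "C\<alpha> / ((real t + 3) * ln (real t + 3)) \<le> \<alpha> t" for t
  proof -
    have "(real t + 3) * ln (real t + 3) powr \<nu> \<le> (real t + 3) * ln (real t + 3)"
      using l2[of t] by (intro mult_left_mono) auto
    moreover have "0 < (real t + 3) * ln (real t + 3) powr \<nu>" using l1[of t] by simp
    ultimately have "C\<alpha> / ((real t + 3) * ln (real t + 3)) \<le> C\<alpha> / ((real t + 3) * ln (real t + 3) powr \<nu>)"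
      using Ca by (intro divide_left_mono) auto
    then show ?thesis using a by simp
  qed
  moreover have "0 < \<alpha> t" for t using a Ca l1[of t] by (simp add: order_less_le_trans[OF zero_less_one])
  ultimately show ?thesis using T Ca by auto
qed

lemma lnln_step:
  fixes x :: real assumes x: "x \<ge> 3"
  shows "ln (ln (x + 1)) - ln (ln x) \<le> 1 / (x * ln x)"
proof -
  have l1: "ln x \<ge> 1" using ln_ge1 x by simp
  have l2: "ln (x + 1) \<ge> 1" using ln_ge1[of "x+1"] x by simp
  have "ln (x + 1) - ln x = ln ((x + 1) / x)" using x by (simp add: ln_div)
  also have "\<dots> \<le> (x + 1) / x - 1" using x by (intro ln_le_minus_one) auto
  also have "\<dots> = 1 / x" using x by (simp add: field_simps)
  finally have d: "ln (x + 1) - ln x \<le> 1 / x" .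
  have "ln (ln (x + 1)) - ln (ln x) = ln (ln (x + 1) / ln x)" using l1 l2 by (simp add: ln_div)
  also have "\<dots> \<le> ln (x + 1) / ln x - 1" using l1 l2 by (intro ln_le_minus_one) auto
  also have "\<dots> = (ln (x + 1) - ln x) / ln x" using l1 by (simp add: field_simps)
  also have "\<dots> \<le> (1 / x) / ln x" using d l1 by (intro divide_right_mono) auto
  finally show ?thesis by simp
qed

lemma diverge:
  assumes Ca: "C\<alpha> > 0" and lb: "\<And>t. C\<alpha> / ((real t + 3) * ln (real t + 3)) \<le> \<alpha> t"
  shows "\<exists>k. c \<le> (\<Sum>t\<in>{s..<k}. \<alpha> t)"
proof -
  have ind: "C\<alpha> * (ln (ln (real (s + n) + 3)) - ln (ln (real s + 3))) \<le> (\<Sum>t\<in>{s..<s+n}. \<alpha> t)" for n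
  proof (induction n)
    case 0 then show ?case by simp
  next
    case (Suc n)
    have st: "ln (ln (real (s + n) + 3 + 1)) - ln (ln (real (s + n) + 3)) \<le> 1 / ((real (s + n) + 3) * ln (real (s + n) + 3))"
      by (rule lnln_step) simp
    have "C\<alpha> * (ln (ln (real (s + Suc n) + 3)) - ln (ln (real s + 3)))
        = C\<alpha> * (ln (ln (real (s + n) + 3)) - ln (ln (real s + 3)))
          + C\<alpha> * (ln (ln (real (s + n) + 3 + 1)) - ln (ln (real (s + n) + 3)))"
      by (simp add: algebra_simps)
    also have "\<dots> \<le> (\<Sum>t\<in>{s..<s+n}. \<alpha> t) + C\<alpha> / ((real (s + n) + 3) * ln (real (s + n) + 3))"
      using Suc.IH mult_left_mono[OF st, of C\<alpha>] Ca by simp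
    also have "\<dots> \<le> (\<Sum>t\<in>{s..<s+n}. \<alpha> t) + \<alpha> (s + n)" using lb[of "s + n"] by simp
    also have "\<dots> = (\<Sum>t\<in>{s..<s + Suc n}. \<alpha> t)" by simp
    finally show ?case .
  qed
  define y where "y = ln (ln (real s + 3)) + \<bar>c\<bar> / C\<alpha>"
  define n where "n = nat \<lceil>exp (exp y)\<rceil>"
  have "exp (exp y) \<le> real (s + n) + 3" unfolding n_def by linarith
  then have "ln (exp (exp y)) \<le> ln (real (s + n) + 3)" by (subst ln_le_cancel_iff) auto
  then have "exp y \<le> ln (real (s + n) + 3)" by simp
  then have "ln (exp y) \<le> ln (ln (real (s + n) + 3))" by (subst ln_le_cancel_iff) auto
  then have "y \<le> ln (ln (real (s + n) + 3))" by simp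
  then have "\<bar>c\<bar> / C\<alpha> \<le> ln (ln (real (s + n) + 3)) - ln (ln (real s + 3))" unfolding y_def by simp
  then have "\<bar>c\<bar> \<le> C\<alpha> * (ln (ln (real (s + n) + 3)) - ln (ln (real s + 3)))"
    using Ca by (simp add: field_simps)
  then show ?thesis using ind[of n] by (intro exI[of _ "s + n"]) linarith
qed

lemma anchor_facts:
  assumes pos: "\<And>t. 0 < \<alpha> t" and Tpos: "\<And>m. 0 < T m" and le: "\<And>m t. m \<le> t \<Longrightarrow> \<alpha> t \<le> T m"
    and div: "\<And>s c. \<exists>k. c \<le> (\<Sum>t\<in>{s..<k}. \<alpha> t)"
  shows "m \<le> anchor \<alpha> T m \<and> (\<Sum>t\<in>{anchor \<alpha> T m..<anchor \<alpha> T (Suc m)}. \<alpha> t) \<le> 2 * T m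
     \<and> anchor \<alpha> T m < anchor \<alpha> T (Suc m)"
proof (induction m)
  have step: "(\<Sum>t\<in>{anchor \<alpha> T m..<anchor \<alpha> T (Suc m)}. \<alpha> t) \<le> T m + \<alpha> (anchor \<alpha> T (Suc m) - 1)
     \<and> anchor \<alpha> T m < anchor \<alpha> T (Suc m)" for m
  proof -
    let ?a = "anchor \<alpha> T m"
    let ?P = "\<lambda>k. (\<Sum>t\<in>{?a..<k}. \<alpha> t) \<ge> T m"
    obtain k0 where "?P k0" using div by blast
    then have Pk: "?P (LEAST k. ?P k)" by (rule LeastI)
    have k: "anchor \<alpha> T (Suc m) = (LEAST k. ?P k)" by simp
    have gt: "?a < anchor \<alpha> T (Suc m)"
    proof (rule ccontr)
      assume "\<not> ?thesis"
      then have "{?a..<anchor \<alpha> T (Suc m)} = {}" by auto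
      then show False using Pk k Tpos[of m] by auto
    qed
    define k where "k = anchor \<alpha> T (Suc m)"
    have "k - 1 < k" using gt k_def by simp
    then have np: "\<not> ?P (k - 1)" using not_less_Least k k_def by metis
    have "{?a..<k} = insert (k - 1) {?a..<k-1}" using gt k_def by auto
    then have "(\<Sum>t\<in>{?a..<k}. \<alpha> t) = \<alpha> (k - 1) + (\<Sum>t\<in>{?a..<k-1}. \<alpha> t)" by simp
    then show ?thesis using np gt k_def by simp
  qed
  {
    case 0
    have "\<alpha> (anchor \<alpha> T (Suc 0) - 1) \<le> T 0" by (rule le) simp
    then show ?case using step[of 0] by simp
  next
    case (Suc m)
    have a: "Suc m \<le> anchor \<alpha> T (Suc m)" using Suc by linarith
    have b: "anchor \<alpha> T (Suc m) < anchor \<alpha> T (Suc (Suc m))" using step by blast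
    have "\<alpha> (anchor \<alpha> T (Suc (Suc m)) - 1) \<le> T (Suc m)" by (rule le) (use a b in linarith)
    then show ?case using a step[of "Suc m"] by simp
  }
qed




lemma vec_nth_meas:
  fixes f :: "'a \<Rightarrow> real^'d"
  assumes "f \<in> borel_measurable M"
  shows "(\<lambda>x. f x $ i) \<in> borel_measurable M"
proof -
  have "(\<lambda>x. inner (f x) (axis i 1)) \<in> borel_measurable M" using assms by measurable
  moreover have "(\<lambda>x. inner (f x) (axis i 1)) = (\<lambda>x. f x $ i)" by (simp add: inner_axis)
  ultimately show ?thesis by simp
qed

lemma vec_lambda_meas:
  fixes c :: "'d::finite \<Rightarrow> 'a \<Rightarrow> real"
  assumes "\<And>i. c i \<in> borel_measurable M"
  shows "(\<lambda>x. (\<chi> i. c i x) :: real^'d) \<in> borel_measurable M"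
proof -
  have eq: "(\<lambda>x. (\<chi> i. c i x) :: real^'d) = (\<lambda>x. \<Sum>j\<in>UNIV. c j x *\<^sub>R axis j 1)"
    by (rule ext, subst vec_eq_iff) (simp add: sum_component axis_def if_distrib cong: if_cong)
  have "(\<lambda>x. \<Sum>j\<in>UNIV. c j x *\<^sub>R (axis j 1 :: real^'d)) \<in> borel_measurable M"
    by (intro borel_measurable_sum borel_measurable_scaleR assms measurable_const) auto
  then show ?thesis unfolding eq .
qed

lemma q_meas:
  fixes f :: "'a \<Rightarrow> real^'d"
  assumes f: "f \<in> borel_measurable Mx"
  shows "(\<lambda>x. (\<chi> i. real_of_int \<lfloor>f x $ i * r\<rfloor> / r) :: real^'d) \<in> borel_measurable Mx"
proof (rule vec_lambda_meas)
  fix i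
  have c: "(\<lambda>x. r) \<in> borel_measurable Mx" by (rule measurable_const) simp
  have "(\<lambda>x. f x $ i * r) \<in> borel_measurable Mx"
    by (rule borel_measurable_times[OF vec_nth_meas[OF f] c])
  from measurable_compose[OF this borel_measurable_real_floor]
  have "(\<lambda>x. real_of_int \<lfloor>f x $ i * r\<rfloor>) \<in> borel_measurable Mx" .
  then show "(\<lambda>x. real_of_int \<lfloor>f x $ i * r\<rfloor> / r) \<in> borel_measurable Mx"
    by (rule borel_measurable_divide[OF _ c])
qed

lemma caratheodory:
  fixes H :: "real^'d \<Rightarrow> 'y \<Rightarrow> real^'d" and f :: "'a \<Rightarrow> real^'d"
  assumes Hm: "\<And>w. H w \<in> borel_measurable S"
    and lipE: "\<And>w w' y. y \<in> space S \<Longrightarrow> norm (H w y - H w' y) \<le> L * norm (w - w')"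
    and L: "L \<ge> 0"
    and f: "f \<in> borel_measurable Mx" and g: "g \<in> Mx \<rightarrow>\<^sub>M S"
  shows "(\<lambda>x. H (f x) (g x)) \<in> borel_measurable Mx"
proof -
  define q :: "nat \<Rightarrow> real^'d \<Rightarrow> real^'d"
    where "q n v = (\<chi> i. real_of_int \<lfloor>v $ i * real (Suc n)\<rfloor> / real (Suc n))" for n v
  define I :: "nat \<Rightarrow> (real^'d) set"
    where "I n = range (\<lambda>k::'d \<Rightarrow> int. (\<chi> i. real_of_int (k i) / real (Suc n)))" for n
  have cI: "countable (I n)" for n unfolding I_def by (intro countable_image countableI_type)
  have qI: "q n v \<in> I n" for n v
    unfolding q_def I_def by (rule image_eqI[where x="\<lambda>i. \<lfloor>v $ i * real (Suc n)\<rfloor>"]) auto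
  have qm: "(\<lambda>x. q n (f x)) \<in> borel_measurable Mx" for n unfolding q_def by (rule q_meas[OF f])
  have qc: "(\<lambda>x. q n (f x)) \<in> Mx \<rightarrow>\<^sub>M count_space (I n)" for n
    unfolding measurable_count_space_eq_countable[OF cI]
  proof (intro conjI ballI)
    show "(\<lambda>x. q n (f x)) \<in> space Mx \<rightarrow> I n" using qI by auto
    fix a show "(\<lambda>x. q n (f x)) -` {a} \<inter> space Mx \<in> sets Mx"
      using measurable_sets[OF qm borel_closed[OF closed_singleton]] by simp
  qed
  have hn: "(\<lambda>x. H (q n (f x)) (g x)) \<in> borel_measurable Mx" for n
    using measurable_compose_countable'[where f="\<lambda>i x. H i (g x)" and g="\<lambda>x. q n (f x)", OF _ qc cI]
      measurable_compose[OF g Hm] by blast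
  have qconv: "norm (q n v - v) \<le> real CARD('d) / real (Suc n)" for n v
  proof -
    let ?r = "real (Suc n)"
    have "norm (q n v - v) \<le> (\<Sum>i\<in>UNIV. \<bar>(q n v - v) $ i\<bar>)" by (rule norm_le_l1_cart)
    also have "\<dots> \<le> (\<Sum>i\<in>(UNIV::'d set). 1 / ?r)"
    proof (rule sum_mono)
      fix i
      have e: "(q n v - v) $ i = (real_of_int \<lfloor>v$i * ?r\<rfloor> - v$i * ?r) / ?r"
        unfolding q_def by (simp add: field_simps)
      have "\<bar>real_of_int \<lfloor>v$i * ?r\<rfloor> - v$i * ?r\<bar> \<le> 1" by linarith
      then have "\<bar>real_of_int \<lfloor>v$i * ?r\<rfloor> - v$i * ?r\<bar> / ?r \<le> 1 / ?r"
        by (rule divide_right_mono) simp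
      then show "\<bar>(q n v - v) $ i\<bar> \<le> 1 / ?r" unfolding e abs_divide by simp
    qed
    also have "\<dots> = real CARD('d) / ?r" by simp
    finally show ?thesis .
  qed
  show ?thesis
  proof (rule borel_measurable_LIMSEQ_metric[OF hn])
    fix x assume x: "x \<in> space Mx"
    have gx: "g x \<in> space S" using measurable_space[OF g x] .
    have lim0: "(\<lambda>n. L * (real CARD('d) / real (Suc n))) \<longlonglongrightarrow> 0"
      by (rule tendsto_mult_right_zero, rule LIMSEQ_Suc[OF lim_const_over_n])
    have "(\<lambda>n. H (q n (f x)) (g x) - H (f x) (g x)) \<longlonglongrightarrow> 0"
    proof (rule Lim_null_comparison[OF _ lim0], rule always_eventually, rule allI)
      fix n
      have "norm (H (q n (f x)) (g x) - H (f x) (g x)) \<le> L * norm (q n (f x) - f x)" by (rule lipE[OF gx])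
      also have "\<dots> \<le> L * (real CARD('d) / real (Suc n))" using qconv L by (intro mult_left_mono) auto
      finally show "norm (H (q n (f x)) (g x) - H (f x) (g x)) \<le> L * (real CARD('d) / real (Suc n))" .
    qed
    then show "(\<lambda>n. H (q n (f x)) (g x)) \<longlonglongrightarrow> H (f x) (g x)" by (rule LIM_zero_cancel)
  qed
qed




lemma filt_facts:
  assumes Ym: "\<And>t. Y t \<in> M \<rightarrow>\<^sub>M S"
  shows "subalgebra M (filt M S Y n)" and "\<And>s. s \<in> {1..n} \<Longrightarrow> Y s \<in> filt M S Y n \<rightarrow>\<^sub>M S"
proof -
  let ?G = "{Y s -` A \<inter> space M | s A. s \<in> {1..n} \<and> A \<in> sets S}"
  have Gsub: "?G \<subseteq> Pow (space M)" by auto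
  have sp: "space (filt M S Y n) = space M" unfolding filt_def gen_sigma_def using Gsub by simp
  have st: "sets (filt M S Y n) = sigma_sets (space M) ?G" unfolding filt_def gen_sigma_def using Gsub by simp
  have "?G \<subseteq> sets M" using measurable_sets[OF Ym] by auto
  then have "sets (filt M S Y n) \<subseteq> sets M" unfolding filt_def gen_sigma_def
    using sigma_le_sets[OF Gsub] by simp
  then show "subalgebra M (filt M S Y n)" unfolding subalgebra_def using sp by simp
  fix s assume s: "s \<in> {1..n}"
  show "Y s \<in> filt M S Y n \<rightarrow>\<^sub>M S"
  proof (rule measurableI)
    fix x assume "x \<in> space (filt M S Y n)"
    then show "Y s x \<in> space S" using measurable_space[OF Ym] sp by auto
  next
    fix A assume "A \<in> sets S"
    then have "Y s -` A \<inter> space M \<in> ?G" using s by blast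
    then show "Y s -` A \<inter> space (filt M S Y n) \<in> sets (filt M S Y n)"
      unfolding sp st by (rule sigma_sets.Basic)
  qed
qed

lemma iterate_Suc_fun:
  "iterate H \<alpha> Y w0 (Suc t) = (\<lambda>\<omega>. iterate H \<alpha> Y w0 t \<omega>
     + \<alpha> t *\<^sub>R (H (iterate H \<alpha> Y w0 t \<omega>) (Y (Suc t) \<omega>) - iterate H \<alpha> Y w0 t \<omega>))"
  by (rule ext) simp

lemma iterate_meas:
  fixes H :: "real^'d \<Rightarrow> 'y \<Rightarrow> real^'d"
  assumes Ym: "\<And>t. Y t \<in> M \<rightarrow>\<^sub>M S"
    and Hm: "\<And>w. H w \<in> borel_measurable S"
    and lipE: "\<And>w w' y. y \<in> space S \<Longrightarrow> norm (H w y - H w' y) \<le> L * norm (w - w')"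
    and L: "L \<ge> 0"
  shows "t \<le> n \<Longrightarrow> iterate H \<alpha> Y w0 t \<in> borel_measurable (filt M S Y n)"
proof (induction t)
  case 0 then show ?case by simp
next
  case (Suc t)
  have w: "iterate H \<alpha> Y w0 t \<in> borel_measurable (filt M S Y n)" using Suc by simp
  have y: "Y (Suc t) \<in> filt M S Y n \<rightarrow>\<^sub>M S" using filt_facts(2)[OF Ym] Suc.prems by simp
  have h: "(\<lambda>\<omega>. H (iterate H \<alpha> Y w0 t \<omega>) (Y (Suc t) \<omega>)) \<in> borel_measurable (filt M S Y n)"
    by (rule caratheodory[OF Hm lipE L w y])
  show ?case unfolding iterate_Suc_fun
    by (intro borel_measurable_add borel_measurable_scaleR borel_measurable_diff w h measurable_const) simp
qed

lemma iterate_bound: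
  fixes H :: "real^'d \<Rightarrow> 'y \<Rightarrow> real^'d"
  assumes Ym: "\<And>t. Y t \<in> M \<rightarrow>\<^sub>M S" and nN: "is_norm N"
    and hg: "\<And>w y. y \<in> space S \<Longrightarrow> N (H w y - w) \<le> a * N w + b" and a: "a \<ge> 0" and b: "b \<ge> 0"
  shows "\<exists>B. \<forall>\<omega>\<in>space M. N (iterate H \<alpha> Y w0 t \<omega>) \<le> B"
proof (induction t)
  case 0 then show ?case by auto
next
  case (Suc t)
  then obtain B where B: "\<And>\<omega>. \<omega> \<in> space M \<Longrightarrow> N (iterate H \<alpha> Y w0 t \<omega>) \<le> B" by blast
  show ?case
  proof (intro exI ballI)
    fix \<omega> assume om: "\<omega> \<in> space M"
    let ?w = "iterate H \<alpha> Y w0 t \<omega>"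
    have y: "Y (Suc t) \<omega> \<in> space S" using measurable_space[OF Ym om] .
    have "N (iterate H \<alpha> Y w0 (Suc t) \<omega>) \<le> N ?w + N (\<alpha> t *\<^sub>R (H ?w (Y (Suc t) \<omega>) - ?w))"
      by (simp add: isnorm_tri[OF nN])
    also have "\<dots> = N ?w + \<bar>\<alpha> t\<bar> * N (H ?w (Y (Suc t) \<omega>) - ?w)" by (simp add: isnorm_scale[OF nN])
    also have "\<dots> \<le> N ?w + \<bar>\<alpha> t\<bar> * (a * N ?w + b)"
      using hg[OF y, of ?w] by (intro add_left_mono mult_left_mono) auto
    also have "\<dots> \<le> B + \<bar>\<alpha> t\<bar> * (a * B + b)"
      using B[OF om] a by (intro add_mono mult_left_mono) auto
    finally show "N (iterate H \<alpha> Y w0 (Suc t) \<omega>) \<le> B + \<bar>\<alpha> t\<bar> * (a * B + b)" .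
  qed
qed




lemma isnorm_meas:
  fixes N :: "real^'d \<Rightarrow> real"
  assumes "is_norm N" shows "N \<in> borel_measurable borel"
proof -
  obtain K where K: "K \<ge> 0" "\<And>x. N x \<le> K * norm x" using isnorm_upper[OF assms] by blast
  have "lipschitz_on K UNIV N"
  proof (rule lipschitz_onI)
    fix x y :: "real^'d"
    have "N x - N y \<le> N (x - y)" "N y - N x \<le> N (y - x)" using isnorm_rev_tri[OF assms] by auto
    moreover have "N (x - y) \<le> K * dist x y" "N (y - x) \<le> K * dist x y"
      using K(2)[of "x - y"] K(2)[of "y - x"] by (auto simp: dist_norm norm_minus_commute)
    ultimately show "dist (N x) (N y) \<le> K * dist x y" by (auto simp: dist_real_def abs_if)
  qed (use K in auto)
  then have "continuous_on UNIV N" using lipschitz_on_continuous_on by blast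
  then show ?thesis by (rule borel_measurable_continuous_onI)
qed

theorem lemma6:
  fixes M :: "'a measure" and S :: "'y measure" and Y :: "nat \<Rightarrow> 'a \<Rightarrow> 'y"
    and P :: "'y \<Rightarrow> 'y measure" and dY :: "'y measure"
    and C_A \<rho> \<kappa> L_h C\<alpha> \<xi> :: real
    and H :: "real^'d \<Rightarrow> 'y \<Rightarrow> real^'d" and N Ns :: "real^'d \<Rightarrow> real"
    and w0 wstar :: "real^'d" and \<alpha> T :: "nat \<Rightarrow> real"
  assumes markov: "markov_chain M S Y P"
    and stat: "stationary S P dY"
    and stat_unique: "\<And>\<mu>. stationary S P \<mu> \<Longrightarrow> \<mu> = dY"
    and rho: "0 \<le> \<rho>" "\<rho> < 1"
    and mixing: "\<And>y n f. y \<in> space S \<Longrightarrow> f \<in> borel_measurable S \<Longrightarrow> (\<And>x. \<bar>f x\<bar> \<le> 1) \<Longrightarrow>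
        \<bar>(\<integral>x. f x \<partial>(kernel_pow S P n y)) - (\<integral>x. f x \<partial>dY)\<bar> \<le> C_A * \<rho> ^ n"
    and H_meas: "\<And>w. H w \<in> borel_measurable S"
    and norm: "is_norm N"
    and kappa: "0 \<le> \<kappa>" "\<kappa> < 1"
    and contr: "\<And>w w'. N ((\<integral>y. H w y \<partial>dY) - (\<integral>y. H w' y \<partial>dY)) \<le> \<kappa> * N (w - w')"
    and fixpt: "(\<integral>y. H wstar y \<partial>dY) = wstar"
    and lip: "\<And>w w' y. y \<in> space S \<Longrightarrow> N (H w y - H w' y) \<le> L_h * N (w - w')"
    and bdd0: "\<exists>B. \<forall>y \<in> space S. N (H 0 y) \<le> B"
    and Calpha: "C\<alpha> > 0"
    and lr: "lr_setup C\<alpha> \<alpha> T"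
    and norm_s: "is_norm Ns"
    and smooth: "smooth_wrt (\<lambda>x. (1/2) * (Ns x)\<^sup>2) Ns"
    and xi: "\<xi> > 0"
  shows "\<exists>C m0. \<forall>m \<ge> m0. AE \<omega> in M.
           moreau_norm N Ns \<xi> (z2 M S H \<alpha> T Y w0 m \<omega>)
             \<le> T m * C * (moreau_norm N Ns \<xi> (iterate H \<alpha> Y w0 (anchor \<alpha> T m) \<omega> - wstar) + 1)"
proof -
  have ps: "prob_space M" and Ym: "\<And>t. Y t \<in> M \<rightarrow>\<^sub>M S"
    using markov unfolding markov_chain_def by auto
  interpret prob_space M by (rule ps)
  obtain K where K: "K \<ge> 0" "\<And>x. N x \<le> K * norm x" using isnorm_upper[OF norm] by blast
  obtain c1 where c1: "c1 > 0" "\<And>x. c1 * norm x \<le> N x" using isnorm_lower[OF norm] by blast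
  obtain c2 where c2: "c2 > 0" "\<And>w. c2 * norm w \<le> moreau_norm N Ns \<xi> w"
    using moreau_ge[OF norm norm_s xi] by blast
  obtain B0 where B0: "\<And>y. y \<in> space S \<Longrightarrow> N (H 0 y) \<le> B0" using bdd0 by blast
  define B where "B = max B0 0"
  have B: "B \<ge> 0" "\<And>y. y \<in> space S \<Longrightarrow> N (H 0 y) \<le> B" using B0 unfolding B_def by force+
  define La where "La = \<bar>L_h\<bar>"
  have La: "La \<ge> 0" unfolding La_def by simp
  have lipN: "N (H w y - H w' y) \<le> La * N (w - w')" if "y \<in> space S" for w w' y
  proof -
    have "L_h * N (w - w') \<le> La * N (w - w')" unfolding La_def
      using isnorm_nonneg[OF norm, of "w - w'"] by (intro mult_right_mono) auto
    then show ?thesis using lip[OF that, of w w'] by linarith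
  qed
  have Gb: "N (H w y - w) \<le> (La + 1) * N w + B" if y: "y \<in> space S" for w y
  proof -
    have "H w y - w = (H w y - H 0 y) + (H 0 y - w)" by simp
    then have "N (H w y - w) \<le> N (H w y - H 0 y) + N (H 0 y - w)" using isnorm_tri[OF norm] by metis
    also have "\<dots> \<le> N (H w y - H 0 y) + (N (H 0 y) + N w)"
      using isnorm_diff_tri[OF norm] by (intro add_left_mono) auto
    also have "\<dots> \<le> La * N w + (B + N w)" using lipN[OF y, of w 0] B(2)[OF y] by simp
    finally show ?thesis by (simp add: algebra_simps)
  qed
  define LE where "LE = La * K / c1"
  have LE: "LE \<ge> 0" unfolding LE_def using La K c1 by simp
  have lipE: "norm (H w y - H w' y) \<le> LE * norm (w - w')" if y: "y \<in> space S" for w w' y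
  proof -
    have "c1 * norm (H w y - H w' y) \<le> La * N (w - w')" using c1(2) lipN[OF y] order_trans by blast
    also have "\<dots> \<le> La * (K * norm (w - w'))" using K(2) La by (intro mult_left_mono) auto
    finally show ?thesis unfolding LE_def using c1(1) by (simp add: field_simps)
  qed
  have Imeas: "\<And>n t. t \<le> n \<Longrightarrow> iterate H \<alpha> Y w0 t \<in> borel_measurable (filt M S Y n)"
    by (rule iterate_meas[OF Ym H_meas lipE LE])
  have a1: "La + 1 \<ge> 0" using La by simp
  have Ibd: "\<And>t. \<exists>Bt. \<forall>\<omega>\<in>space M. N (iterate H \<alpha> Y w0 t \<omega>) \<le> Bt"
    by (rule iterate_bound[where H=H and N=N and Y=Y and M=M and S=S and a="La+1" and b=B, OF Ym norm Gb a1 B(1)])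
  note lf = lr_facts[OF lr Calpha]
  have lrpos: "\<And>t. 0 < \<alpha> t" using lf by blast
  have Tpos: "\<And>m. 0 < T m" using lf by blast
  have lrle: "\<And>m t. m \<le> t \<Longrightarrow> \<alpha> t \<le> T m" using lf by blast
  have lrlb: "\<And>t. C\<alpha> / ((real t + 3) * ln (real t + 3)) \<le> \<alpha> t" using lf by blast
  have divg: "\<And>s c. \<exists>k. c \<le> (\<Sum>t\<in>{s..<k}. \<alpha> t)" using diverge[OF Calpha lrlb] by blast
  note anch = anchor_facts[where \<alpha>=\<alpha> and T=T, OF lrpos Tpos lrle divg]
  define d where "d = real CARD('d)"
  define D where "D = (c1 + K * d) / c1"
  define Mx where "Mx = max ((La + 1) * K / c2) ((La + 1) * N wstar + B)"
  have main: "AE \<omega> in M. moreau_norm N Ns \<xi> (z2 M S H \<alpha> T Y w0 m \<omega>)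
             \<le> T m * (2 * D * Mx) * (moreau_norm N Ns \<xi> (iterate H \<alpha> Y w0 (anchor \<alpha> T m) \<omega> - wstar) + 1)" for m
  proof -
    define tm where "tm = anchor \<alpha> T m"
    define tn where "tn = anchor \<alpha> T (Suc m)"
    define F where "F = filt M S Y tm"
    define wm where "wm = iterate H \<alpha> Y w0 tm"
    define X where "X t \<omega> = H (wm \<omega>) (Y (Suc t) \<omega>) - wm \<omega>" for t \<omega>
    define Z where "Z \<omega> = ((La + 1) * N (wm \<omega>) + B) / c1" for \<omega>
    have subF: "subalgebra M F" unfolding F_def by (rule filt_facts(1)[OF Ym])
    interpret fs: finite_measure_subalgebra M F
      by (intro finite_measure_subalgebra.intro finite_measure_axioms finite_measure_subalgebra_axioms.intro subF)
    have wmF: "wm \<in> borel_measurable F" unfolding wm_def F_def by (rule Imeas) simp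
    have wmM: "wm \<in> borel_measurable M" by (rule measurable_from_subalg[OF subF wmF])
    have NwF: "(\<lambda>\<omega>. N (wm \<omega>)) \<in> borel_measurable F"
      by (rule measurable_compose[OF wmF isnorm_meas[OF norm]])
    have ZF: "Z \<in> borel_measurable F" unfolding Z_def
      by (intro borel_measurable_divide borel_measurable_add borel_measurable_times NwF measurable_const) auto
    have ZM: "Z \<in> borel_measurable M" by (rule measurable_from_subalg[OF subF ZF])
    obtain Bt where Bt: "\<And>\<omega>. \<omega> \<in> space M \<Longrightarrow> N (wm \<omega>) \<le> Bt" using Ibd[of tm] unfolding wm_def by blast
    define ZB where "ZB = ((La + 1) * Bt + B) / c1"
    have Zbd: "0 \<le> Z \<omega> \<and> Z \<omega> \<le> ZB" if om: "\<omega> \<in> space M" for \<omega>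
    proof
      show "0 \<le> Z \<omega>" unfolding Z_def using c1(1) a1 B(1) isnorm_nonneg[OF norm, of "wm \<omega>"] by simp
      have "(La + 1) * N (wm \<omega>) \<le> (La + 1) * Bt" using Bt[OF om] a1 by (rule mult_left_mono)
      then show "Z \<omega> \<le> ZB" unfolding Z_def ZB_def using c1(1) by (intro divide_right_mono) auto
    qed
    have Zint: "integrable M Z"
      by (rule integrable_const_bound[where B=ZB, OF AE_I2 ZM]) (use Zbd in auto)
    have Hm: "(\<lambda>\<omega>. H (wm \<omega>) (Y (Suc t) \<omega>)) \<in> borel_measurable M" for t
      by (rule caratheodory[OF H_meas lipE LE wmM Ym])
    have XM: "X t \<in> borel_measurable M" for t unfolding X_def[abs_def]
      by (intro borel_measurable_diff Hm wmM)
    have Xpt: "N (X t \<omega>) \<le> c1 * Z \<omega>" if om: "\<omega> \<in> space M" for t \<omega>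
    proof -
      have "Y (Suc t) \<omega> \<in> space S" using measurable_space[OF Ym om] .
      then have "N (X t \<omega>) \<le> (La + 1) * N (wm \<omega>) + B" unfolding X_def by (rule Gb)
      then show ?thesis unfolding Z_def using c1(1) by simp
    qed
    have Xcomp: "\<bar>X t \<omega> $ i\<bar> \<le> Z \<omega>" if om: "\<omega> \<in> space M" for t i \<omega>
    proof -
      have "c1 * norm (X t \<omega>) \<le> c1 * Z \<omega>" using c1(2)[of "X t \<omega>"] Xpt[OF om, of t] by linarith
      then have "norm (X t \<omega>) \<le> Z \<omega>" using c1(1) by simp
      then show ?thesis using component_le_norm_cart[of "X t \<omega>" i] by linarith
    qed
    have Xint: "integrable M (\<lambda>\<omega>. X t \<omega> $ i)" for t i
    proof (rule integrable_const_bound[where B=ZB, OF AE_I2])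
      show "(\<lambda>\<omega>. X t \<omega> $ i) \<in> borel_measurable M" by (rule vec_nth_meas[OF XM])
      fix \<omega> assume "\<omega> \<in> space M"
      then show "norm (X t \<omega> $ i) \<le> ZB" using Xcomp[of \<omega> t i] Zbd[of \<omega>] by simp
    qed
    have nZint: "integrable M (\<lambda>\<omega>. - Z \<omega>)" using Zint by (rule integrable_minus)
    have nZF: "(\<lambda>\<omega>. - Z \<omega>) \<in> borel_measurable F" using ZF by (rule borel_measurable_uminus)
    have CEb: "AE \<omega> in M. \<bar>real_cond_exp M F (\<lambda>\<omega>. X t \<omega> $ i) \<omega>\<bar> \<le> Z \<omega>" for t i
    proof -
      have le1: "AE \<omega> in M. X t \<omega> $ i \<le> Z \<omega>"
      proof (rule AE_I2)
        fix \<omega> assume "\<omega> \<in> space M"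
        from Xcomp[OF this, of t i] show "X t \<omega> $ i \<le> Z \<omega>" by linarith
      qed
      have le2: "AE \<omega> in M. - Z \<omega> \<le> X t \<omega> $ i"
      proof (rule AE_I2)
        fix \<omega> assume "\<omega> \<in> space M"
        from Xcomp[OF this, of t i] show "- Z \<omega> \<le> X t \<omega> $ i" by linarith
      qed
      have 1: "AE \<omega> in M. real_cond_exp M F (\<lambda>\<omega>. X t \<omega> $ i) \<omega> \<le> real_cond_exp M F Z \<omega>"
        by (rule fs.real_cond_exp_mono[OF le1 Xint Zint])
      have 2: "AE \<omega> in M. real_cond_exp M F Z \<omega> = Z \<omega>" by (rule fs.real_cond_exp_F_meas[OF Zint ZF])
      have 3: "AE \<omega> in M. real_cond_exp M F (\<lambda>\<omega>. - Z \<omega>) \<omega> \<le> real_cond_exp M F (\<lambda>\<omega>. X t \<omega> $ i) \<omega>"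
        by (rule fs.real_cond_exp_mono[OF le2 nZint Xint])
      have 4: "AE \<omega> in M. real_cond_exp M F (\<lambda>\<omega>. - Z \<omega>) \<omega> = - Z \<omega>"
        by (rule fs.real_cond_exp_F_meas[OF nZint nZF])
      show ?thesis using 1 2 3 4 by eventually_elim linarith
    qed
    have CEall: "AE \<omega> in M. \<forall>t\<in>{tm..<tn}. \<forall>i. \<bar>real_cond_exp M F (\<lambda>\<omega>. X t \<omega> $ i) \<omega>\<bar> \<le> Z \<omega>"
      by (intro AE_finite_allI AE_all_countable[THEN iffD2] allI CEb) simp
    have sumb: "(\<Sum>t\<in>{tm..<tn}. \<alpha> t) \<le> 2 * T m" unfolding tm_def tn_def using anch[where m=m] by blast
    have Kd: "K * d \<ge> 0" unfolding d_def using K(1) by simp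
    have Mx1: "(La + 1) * K / c2 \<le> Mx" and Mx2: "(La + 1) * N wstar + B \<le> Mx" unfolding Mx_def by auto
    have D0: "D \<ge> 0" unfolding D_def using Kd c1(1) by simp
    have "AE \<omega> in M. moreau_norm N Ns \<xi> (z2 M S H \<alpha> T Y w0 m \<omega>)
             \<le> T m * (2 * D * Mx) * (moreau_norm N Ns \<xi> (wm \<omega> - wstar) + 1)"
      using CEall AE_space
    proof eventually_elim
      fix \<omega> assume h: "\<forall>t\<in>{tm..<tn}. \<forall>i. \<bar>real_cond_exp M F (\<lambda>\<omega>. X t \<omega> $ i) \<omega>\<bar> \<le> Z \<omega>"
        and om: "\<omega> \<in> space M"
      define CE where "CE t = cond_exp_vec M F (X t) \<omega>" for t
      define mo where "mo = moreau_norm N Ns \<xi> (wm \<omega> - wstar)"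
      have z2eq: "z2 M S H \<alpha> T Y w0 m \<omega> = (\<Sum>t\<in>{tm..<tn}. \<alpha> t *\<^sub>R (X t \<omega> - CE t))"
        unfolding z2_def Let_def CE_def X_def wm_def F_def tm_def tn_def by simp
      have Z0: "Z \<omega> \<ge> 0" using Zbd[OF om] by simp
      have NCE: "N (CE t) \<le> K * d * Z \<omega>" if t: "t \<in> {tm..<tn}" for t
      proof -
        have "N (CE t) \<le> K * norm (CE t)" by (rule K(2))
        also have "\<dots> \<le> K * (\<Sum>i\<in>UNIV. \<bar>CE t $ i\<bar>)" by (rule mult_left_mono[OF norm_le_l1_cart K(1)])
        also have "\<dots> \<le> K * (\<Sum>i\<in>(UNIV::'d set). Z \<omega>)"
        proof (intro mult_left_mono sum_mono K(1))
          fix i show "\<bar>CE t $ i\<bar> \<le> Z \<omega>" using h t unfolding CE_def cond_exp_vec_def by simp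
        qed
        also have "\<dots> = K * d * Z \<omega>" unfolding d_def by simp
        finally show ?thesis .
      qed
      have Nterm: "N (\<alpha> t *\<^sub>R (X t \<omega> - CE t)) \<le> \<alpha> t * ((c1 + K * d) * Z \<omega>)" if t: "t \<in> {tm..<tn}" for t
      proof -
        have "N (\<alpha> t *\<^sub>R (X t \<omega> - CE t)) = \<alpha> t * N (X t \<omega> - CE t)"
          using isnorm_scale[OF norm] lrpos[of t] by simp
        also have "\<dots> \<le> \<alpha> t * (N (X t \<omega>) + N (CE t))"
          using lrpos[of t] isnorm_diff_tri[OF norm] by (intro mult_left_mono) auto
        also have "\<dots> \<le> \<alpha> t * (c1 * Z \<omega> + K * d * Z \<omega>)"
          using lrpos[of t] Xpt[OF om, of t] NCE[OF t] by (intro mult_left_mono add_mono) auto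
        finally show ?thesis by (simp add: algebra_simps)
      qed
      have "N (z2 M S H \<alpha> T Y w0 m \<omega>) \<le> (\<Sum>t\<in>{tm..<tn}. N (\<alpha> t *\<^sub>R (X t \<omega> - CE t)))"
        unfolding z2eq by (rule isnorm_sum[OF norm]) simp
      also have "\<dots> \<le> (\<Sum>t\<in>{tm..<tn}. \<alpha> t * ((c1 + K * d) * Z \<omega>))" by (rule sum_mono) (rule Nterm)
      also have "\<dots> = (\<Sum>t\<in>{tm..<tn}. \<alpha> t) * ((c1 + K * d) * Z \<omega>)" by (simp add: sum_distrib_right)
      also have "\<dots> \<le> 2 * T m * ((c1 + K * d) * Z \<omega>)"
        using sumb Z0 Kd c1(1) by (intro mult_right_mono) auto
      also have "(c1 + K * d) * Z \<omega> = D * ((La + 1) * N (wm \<omega>) + B)"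
        unfolding Z_def D_def using c1(1) by simp
      finally have Nz: "N (z2 M S H \<alpha> T Y w0 m \<omega>) \<le> 2 * T m * (D * ((La + 1) * N (wm \<omega>) + B))" .
      have mo0: "mo \<ge> 0" unfolding mo_def using c2(2)[of "wm \<omega> - wstar"] c2(1)
        by (smt (verit) mult_nonneg_nonneg norm_ge_zero)
      have "N (wm \<omega>) \<le> N (wm \<omega> - wstar) + N wstar"
        using isnorm_tri[OF norm, of "wm \<omega> - wstar" wstar] by simp
      also have "N (wm \<omega> - wstar) \<le> K / c2 * mo"
      proof -
        have "N (wm \<omega> - wstar) \<le> K * norm (wm \<omega> - wstar)" by (rule K(2))
        also have "\<dots> \<le> K * (mo / c2)"
          using c2(2)[of "wm \<omega> - wstar"] c2(1) K(1) unfolding mo_def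
          by (intro mult_left_mono) (auto simp: field_simps)
        finally show ?thesis by simp
      qed
      finally have Nw: "N (wm \<omega>) \<le> K / c2 * mo + N wstar" by simp
      have "(La + 1) * N (wm \<omega>) + B \<le> (La + 1) * (K / c2 * mo + N wstar) + B"
        using Nw a1 by (intro add_right_mono mult_left_mono) auto
      also have "\<dots> = ((La + 1) * K / c2) * mo + ((La + 1) * N wstar + B)" by (simp add: algebra_simps)
      also have "\<dots> \<le> Mx * mo + Mx" using Mx1 Mx2 mo0 by (intro add_mono mult_right_mono) auto
      finally have W: "(La + 1) * N (wm \<omega>) + B \<le> Mx * (mo + 1)" by (simp add: algebra_simps)
      have "moreau_norm N Ns \<xi> (z2 M S H \<alpha> T Y w0 m \<omega>) \<le> N (z2 M S H \<alpha> T Y w0 m \<omega>)"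
        by (rule moreau_le[OF norm norm_s xi])
      also have "\<dots> \<le> 2 * T m * (D * ((La + 1) * N (wm \<omega>) + B))" by (rule Nz)
      also have "\<dots> \<le> 2 * T m * (D * (Mx * (mo + 1)))"
        using W D0 Tpos[of m] by (intro mult_left_mono) auto
      finally show "moreau_norm N Ns \<xi> (z2 M S H \<alpha> T Y w0 m \<omega>) \<le> T m * (2 * D * Mx) * (mo + 1)"
        by (simp add: algebra_simps)
    qed
    then show ?thesis unfolding wm_def tm_def .
  qed
  show ?thesis by (intro exI[of _ "2 * D * Mx"] exI[of _ 0] allI impI main)
qed


end
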